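(* Fix $x$ and integers $K\ge 0$, $L\ge 1$. Let $q(z,\psi\mid x)=q(\psi\mid x)\,q(z\mid\psi,x)$ be a joint density with marginal $q(z\mid x)=\int q(z,\psi\mid x)\,d\psi$, and let $p(z,\zeta)$ be a joint density with marginal $p(z)=\int p(z,\zeta)\,d\zeta$. Let $\tau(\psi\mid x,z)$ be a conditional density in $\psi$ such that $\tau(\psi\mid x,z)=0$ implies $q(z,\psi\mid x)=0$, and let $\rho(\zeta\mid z)$ be a conditional density in $\zeta$. Then $$D_{KL}\big(q(z\mid x)\,\|\,p(z)\big)\le\mathbb{E}_{q(z,\psi_0\mid x)}\,\mathbb{E}_{\tau(\psi_{1:K}\mid x,z)}\,\mathbb{E}_{\rho(\zeta_{1:L}\mid z)}\left[\log\frac{\frac{1}{K+1}\sum_{k=0}^K\frac{q(z,\psi_k\mid x)}{\tau(\psi_k\mid x,z)}}{\frac{1}{L}\sum_{l=1}^L\frac{p(z,\zeta_l)}{\rho(\zeta_l\mid z)}}\right],$$ where $(z,\psi_0)\sim q(z,\psi\mid x)$, and given $z$, $\psi_1,\dots,\psi_K$ are i.i.d. from $\tau(\cdot\mid x,z)$ and $\zeta_1,\dots,\zeta_L$ are i.i.d. from $\rho(\cdot\mid z)$.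
   Context: $D_{KL}(q\|p)=\mathbb{E}_q\log(q/p)$ is the Kullback–Leibler divergence; all densities are with respect to fixed base measures. *)

theory Defs
  imports "HOL-Probability.Probability"
begin

definition elog_ratio :: "real \<Rightarrow> real \<Rightarrow> ereal" where
  "elog_ratio a b =
     (if 0 < a \<and> 0 < b then ereal (ln (a / b))
      else if 0 < a then \<infinity>
      else if 0 < b then - \<infinity>
      else 0)"

definition ext_expectation :: "'a measure \<Rightarrow> ('a \<Rightarrow> ereal) \<Rightarrow> ereal" where
  "ext_expectation M f =
     enn2ereal (\<integral>\<^sup>+ x. e2ennreal (f x) \<partial>M) - enn2ereal (\<integral>\<^sup>+ x. e2ennreal (- f x) \<partial>M)"

definition KL_div :: "'a measure \<Rightarrow> ('a \<Rightarrow> real) \<Rightarrow> ('a \<Rightarrow> real) \<Rightarrow> ereal" where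
  "KL_div M qd pd = ext_expectation (density M (\<lambda>z. ennreal (qd z))) (\<lambda>z. elog_ratio (qd z) (pd z))"

end

theory Submission
  imports Defs
begin


lemma swap_inv:
  fixes M :: "'a measure"
  assumes sf: "sigma_finite_measure M" and I: "finite I" "i \<in> I" "j \<in> I"
    and F[measurable]: "F \<in> borel_measurable (PiM I (\<lambda>_. M))"
  shows "(\<integral>\<^sup>+x. F (x(i := x j, j := x i)) \<partial>PiM I (\<lambda>_. M)) = integral\<^sup>N (PiM I (\<lambda>_. M)) F"
proof (cases "i = j")
  case True
  then show ?thesis by simp
next
  case False
  interpret PS: product_sigma_finite "\<lambda>_. M" using sf by (simp add: product_sigma_finite_def)
  interpret MM: pair_sigma_finite M M using sf by (simp add: pair_sigma_finite_def)
  define I0 where "I0 = I - {i, j}"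
  have fin0: "finite I0" using I by (simp add: I0_def)
  interpret S0: sigma_finite_measure "PiM I0 (\<lambda>_. M)" 
    using fin0 by (intro PS.sigma_finite) 
  have Ieq: "I = insert i (insert j I0)" using I by (auto simp: I0_def)
  have ni: "i \<notin> insert j I0" "j \<notin> I0" using False by (auto simp: I0_def)
  have upd_meas: "(\<lambda>w. (snd w)(j := fst (fst w), i := snd (fst w))) \<in> measurable ((M \<Otimes>\<^sub>M M) \<Otimes>\<^sub>M PiM I0 (\<lambda>_. M)) (PiM I (\<lambda>_. M))"
  proof -
    have m1: "(\<lambda>w. (snd w)(j := fst (fst w))) \<in> measurable ((M \<Otimes>\<^sub>M M) \<Otimes>\<^sub>M PiM I0 (\<lambda>_. M)) (PiM (insert j I0) (\<lambda>_. M))"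
      using measurable_fun_upd[where I="insert j I0" and J=I0 and i=j and f=snd and h="\<lambda>w. fst (fst w)"
           and N="(M \<Otimes>\<^sub>M M) \<Otimes>\<^sub>M PiM I0 (\<lambda>_. M)" and M="\<lambda>_. M"]
      by (simp add: case_prod_beta')
    show ?thesis
      using measurable_fun_upd[where I="I" and J="insert j I0" and i=i and f="\<lambda>w. (snd w)(j := fst (fst w))" and h="\<lambda>w. snd (fst w)"
           and N="(M \<Otimes>\<^sub>M M) \<Otimes>\<^sub>M PiM I0 (\<lambda>_. M)" and M="\<lambda>_. M", OF _ m1] Ieq
      by (simp add: case_prod_beta')
  qed
  have gen: "integral\<^sup>N (PiM I (\<lambda>_. M)) G = (\<integral>\<^sup>+a. \<integral>\<^sup>+b. \<integral>\<^sup>+x. G (x(j := b, i := a)) \<partial>PiM I0 (\<lambda>_. M) \<partial>M \<partial>M)"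
    if G[measurable]: "G \<in> borel_measurable (PiM I (\<lambda>_. M))" for G
  proof -
    have G': "G \<in> borel_measurable (PiM (insert i (insert j I0)) (\<lambda>_. M))" using G Ieq by simp
    have "integral\<^sup>N (PiM I (\<lambda>_. M)) G = (\<integral>\<^sup>+a. \<integral>\<^sup>+y. G (y(i := a)) \<partial>PiM (insert j I0) (\<lambda>_. M) \<partial>M)"
      using PS.product_nn_integral_insert_rev[OF _ ni(1) G'] fin0 Ieq by simp
    also have "\<dots> = (\<integral>\<^sup>+a. \<integral>\<^sup>+b. \<integral>\<^sup>+x. G (x(j := b, i := a)) \<partial>PiM I0 (\<lambda>_. M) \<partial>M \<partial>M)"
    proof (rule nn_integral_cong)
      fix a assume a: "a \<in> space M"
      have "(\<lambda>y. G (y(i := a))) \<in> borel_measurable (PiM (insert j I0) (\<lambda>_. M))"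
        apply (rule measurable_compose[OF _ G'])
        apply (rule measurable_fun_upd[where J="insert j I0"])
        using a by auto
      then show "(\<integral>\<^sup>+y. G (y(i := a)) \<partial>PiM (insert j I0) (\<lambda>_. M)) = (\<integral>\<^sup>+b. \<integral>\<^sup>+x. G (x(j := b, i := a)) \<partial>PiM I0 (\<lambda>_. M) \<partial>M)"
        using PS.product_nn_integral_insert_rev[OF fin0 ni(2)] by simp
    qed
    finally show ?thesis .
  qed
  have Fs: "(\<lambda>x. F (x(i := x j, j := x i))) \<in> borel_measurable (PiM I (\<lambda>_. M))"
  proof -
    have "(\<lambda>x. x(i := x j, j := x i)) \<in> measurable (PiM I (\<lambda>_. M)) (PiM I (\<lambda>_. M))"
      apply (rule measurable_fun_upd[where J="I"])
      using I apply auto[1]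
       apply (rule measurable_fun_upd[where J="I"])
      using I by auto
    then show ?thesis by (rule measurable_compose) (rule F)
  qed
  define \<Phi> where "\<Phi> = (\<lambda>a b. \<integral>\<^sup>+x. F (x(j := a, i := b)) \<partial>PiM I0 (\<lambda>_. M))"
  have \<Phi>m0: "(\<lambda>w. \<integral>\<^sup>+x. F (x(j := fst w, i := snd w)) \<partial>PiM I0 (\<lambda>_. M)) \<in> borel_measurable (M \<Otimes>\<^sub>M M)"
    apply (rule S0.borel_measurable_nn_integral[where f="\<lambda>w x. F (x(j := fst w, i := snd w))"])
    using measurable_compose[OF upd_meas F] by (simp add: case_prod_beta')
  have \<Phi>m: "(\<lambda>(a, b). \<Phi> a b) \<in> borel_measurable (M \<Otimes>\<^sub>M M)"
    using \<Phi>m0 by (simp add: \<Phi>_def case_prod_beta')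
  have eq1: "(x(j := b, i := a))(i := (x(j := b, i := a)) j, j := (x(j := b, i := a)) i) = x(j := a, i := b)" for x :: "_ \<Rightarrow> 'a" and a b
    using False by (auto simp: fun_eq_iff)
  have "(\<integral>\<^sup>+x. F (x(i := x j, j := x i)) \<partial>PiM I (\<lambda>_. M)) = (\<integral>\<^sup>+a. \<integral>\<^sup>+b. \<Phi> a b \<partial>M \<partial>M)"
    by (subst gen[OF Fs]) (simp only: eq1 \<Phi>_def)
  also have "\<dots> = (\<integral>\<^sup>+b. \<integral>\<^sup>+a. \<Phi> a b \<partial>M \<partial>M)"
    using MM.Fubini'[OF \<Phi>m] by simp
  also have "\<dots> = integral\<^sup>N (PiM I (\<lambda>_. M)) F"
    by (subst gen[OF F]) (simp add: \<Phi>_def)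
  finally show ?thesis .
qed



lemma ln_ge_one_minus: "0 < x \<Longrightarrow> 1 - 1 / x \<le> ln (x::real)"
proof -
  assume x: "0 < x"
  have "ln (1 / x) \<le> 1 / x - 1" using x by (intro ln_le_minus_one) simp
  then show ?thesis using x by (simp add: ln_div)
qed

lemma ennreal_max_sum: "ennreal a + ennreal b = ennreal (max a 0 + max b 0)"
  by (metis ennreal_plus max.cobounded2 max_def ennreal_neg)

lemma pw1:
  fixes A Q B P :: real
  assumes A: "0 < A" and Q: "0 < Q" and B: "0 \<le> B" and P: "0 \<le> P"
  shows "e2ennreal (- elog_ratio A B) + e2ennreal (elog_ratio Q P) + 2
     \<le> e2ennreal (elog_ratio A B) + e2ennreal (- elog_ratio Q P) + ennreal (Q / A) + ennreal B / ennreal P"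
proof (cases "B = 0")
  case True
  then show ?thesis using A by (simp add: elog_ratio_def)
next
  case False
  then have B': "0 < B" using B by simp
  show ?thesis
  proof (cases "P = 0")
    case True
    have "ennreal B / ennreal P = \<infinity>" using True B' by (simp add: divide_ennreal_def)
    then show ?thesis by simp
  next
    case False
    then have P': "0 < P" using P by simp
    define a where "a = ln (A / B)"
    define c where "c = ln (Q / P)"
    have ea: "elog_ratio A B = ereal a" using A B' by (simp add: elog_ratio_def a_def)
    have ec: "elog_ratio Q P = ereal c" using Q P' by (simp add: elog_ratio_def c_def)
    have "a - c = ln (A / Q) + ln (P / B)"
      using A B' Q P' by (simp add: a_def c_def ln_div)
    also have "\<dots> \<ge> (1 - Q / A) + (1 - B / P)"
      using ln_ge_one_minus[of "A / Q"] ln_ge_one_minus[of "P / B"] A B' Q P' by simp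
    finally have key: "a - c \<ge> 2 - Q / A - B / P" by simp
    have q1: "0 \<le> Q / A" "0 \<le> B / P" using A Q B' P' by auto
    have "e2ennreal (- elog_ratio A B) + e2ennreal (elog_ratio Q P) + 2
        = ennreal (max (-a) 0 + max c 0 + 2)"
      by (simp add: ea ec ennreal_plus ennreal_max_0)
    also have "\<dots> \<le> ennreal (max a 0 + max (-c) 0 + Q / A + B / P)"
      using key q1 by (intro ennreal_leI) linarith
    also have "\<dots> = e2ennreal (elog_ratio A B) + e2ennreal (- elog_ratio Q P) + ennreal (Q / A) + ennreal B / ennreal P"
      using q1 B' P' by (simp add: ea ec ennreal_plus ennreal_max_0 divide_ennreal)
    finally show ?thesis .
  qed
qed

lemma pw2:
  fixes A B :: real
  assumes A: "0 < A" and B: "0 \<le> B"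
  shows "e2ennreal (- elog_ratio A B) \<le> ennreal (B / A)"
proof (cases "B = 0")
  case True
  then show ?thesis using A by (simp add: elog_ratio_def e2ennreal_neg)
next
  case False
  then have B': "0 < B" using B by simp
  have "- ln (A / B) \<le> B / A"
    using ln_ge_one_minus[of "A / B"] A B' by simp
  then show ?thesis using A B' by (simp add: elog_ratio_def ennreal_leI)
qed

lemma pw3:
  fixes Q P :: real
  assumes Q: "0 \<le> Q" and P: "0 \<le> P"
  shows "ennreal Q * e2ennreal (- elog_ratio Q P) \<le> ennreal P"
proof (cases "Q = 0")
  case True then show ?thesis by simp
next
  case False
  then have Q': "0 < Q" using Q by simp
  show ?thesis
  proof (cases "P = 0")
    case True then show ?thesis using Q' by (simp add: elog_ratio_def e2ennreal_neg)
  next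
    case False
    then have P': "0 < P" using P by simp
    have "- ln (Q / P) \<le> P / Q"
      using ln_ge_one_minus[of "Q / P"] Q' P' by simp
    then have "Q * max (- ln (Q / P)) 0 \<le> P" using Q' P'
      by (auto simp: field_simps max_def)
    then have "ennreal (Q * max (- ln (Q / P)) 0) \<le> ennreal P" by (rule ennreal_leI)
    moreover have "ennreal Q * e2ennreal (- elog_ratio Q P) = ennreal Q * ennreal (max (- ln (Q / P)) 0)"
      using Q' P' by (simp add: elog_ratio_def)
    moreover have "ennreal Q * ennreal (max (- ln (Q / P)) 0) = ennreal (Q * max (- ln (Q / P)) 0)"
      by (rule ennreal_mult[symmetric]) (use Q' in auto)
    ultimately show ?thesis by simp
  qed
qed

lemma fin_ineq:
  fixes a b c d :: ennreal
  assumes "c \<noteq> top" "d \<noteq> top" "d + a \<le> b + c"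
  shows "enn2ereal a - enn2ereal c \<le> enn2ereal b - enn2ereal d"
proof -
  obtain c' where c: "c = ennreal c'" "0 \<le> c'" using assms(1) by (cases c) auto
  obtain d' where d: "d = ennreal d'" "0 \<le> d'" using assms(2) by (cases d) auto
  show ?thesis
  proof (cases b)
    case top
    then show ?thesis using d by simp
  next
    case (real b')
    then have "a \<noteq> top" using assms(3) c by (auto simp: top_unique)
    then obtain a' where a: "a = ennreal a'" "0 \<le> a'" by (cases a) auto
    have "ennreal (d' + a') \<le> ennreal (b' + c')" using assms(3) a c d real by (metis ennreal_plus)
    moreover have "0 \<le> b' + c'" using real c by simp
    ultimately have "d' + a' \<le> b' + c'" by (simp only: ennreal_le_iff)
    then show ?thesis using a c d real by simp
  qed
qed



locale ctx =
  fixes MZ :: "'z measure" and MP :: "'psi measure" and MR :: "'zeta measure"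
    and q :: "'z \<Rightarrow> 'psi \<Rightarrow> real"
    and p :: "'z \<Rightarrow> 'zeta \<Rightarrow> real"
    and tau :: "'z \<Rightarrow> 'psi \<Rightarrow> real"
    and rho :: "'z \<Rightarrow> 'zeta \<Rightarrow> real"
    and K L :: nat
  assumes sfZ: "sigma_finite_measure MZ"
    and sfP: "sigma_finite_measure MP"
    and sfR: "sigma_finite_measure MR"
    and L_pos: "1 \<le> L"
    and q_meas[measurable]: "(\<lambda>(z, \<psi>). q z \<psi>) \<in> borel_measurable (MZ \<Otimes>\<^sub>M MP)"
    and q_nonneg: "\<And>z \<psi>. 0 \<le> q z \<psi>"
    and q_norm: "(\<integral>\<^sup>+ w. ennreal (q (fst w) (snd w)) \<partial>(MZ \<Otimes>\<^sub>M MP)) = 1"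
    and p_meas[measurable]: "(\<lambda>(z, \<zeta>). p z \<zeta>) \<in> borel_measurable (MZ \<Otimes>\<^sub>M MR)"
    and p_nonneg: "\<And>z \<zeta>. 0 \<le> p z \<zeta>"
    and p_norm: "(\<integral>\<^sup>+ w. ennreal (p (fst w) (snd w)) \<partial>(MZ \<Otimes>\<^sub>M MR)) = 1"
    and tau_meas[measurable]: "(\<lambda>(z, \<psi>). tau z \<psi>) \<in> borel_measurable (MZ \<Otimes>\<^sub>M MP)"
    and tau_nonneg: "\<And>z \<psi>. 0 \<le> tau z \<psi>"
    and tau_norm: "\<And>z. z \<in> space MZ \<Longrightarrow> (\<integral>\<^sup>+ \<psi>. ennreal (tau z \<psi>) \<partial>MP) = 1"
    and tau_supp: "\<And>z \<psi>. z \<in> space MZ \<Longrightarrow> \<psi> \<in> space MP \<Longrightarrow> tau z \<psi> = 0 \<Longrightarrow> q z \<psi> = 0"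
    and rho_meas[measurable]: "(\<lambda>(z, \<zeta>). rho z \<zeta>) \<in> borel_measurable (MZ \<Otimes>\<^sub>M MR)"
    and rho_nonneg: "\<And>z \<zeta>. 0 \<le> rho z \<zeta>"
    and rho_norm: "\<And>z. z \<in> space MZ \<Longrightarrow> (\<integral>\<^sup>+ \<zeta>. ennreal (rho z \<zeta>) \<partial>MR) = 1"
begin

abbreviation "PT \<equiv> (\<Pi>\<^sub>M k\<in>{1..K}. MP)"
abbreviation "PR \<equiv> (\<Pi>\<^sub>M l\<in>{1..L}. MR)"
abbreviation "\<Omega> \<equiv> MZ \<Otimes>\<^sub>M MP \<Otimes>\<^sub>M PT \<Otimes>\<^sub>M PR"

definition "Dn = (\<lambda>(z, \<psi>0, \<psi>s, \<zeta>s). ennreal (q z \<psi>0 * (\<Prod>k\<in>{1..K}. tau z (\<psi>s k))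
                                              * (\<Prod>l\<in>{1..L}. rho z (\<zeta>s l))))"

lemma sf_inst: "sigma_finite_measure PT" "sigma_finite_measure PR" 
   "product_sigma_finite (\<lambda>k. MP)" "product_sigma_finite (\<lambda>k. MR)"
  using sfP sfR by (auto simp: product_sigma_finite_def intro!: product_sigma_finite.sigma_finite)

lemma Dn_meas[measurable]: "Dn \<in> borel_measurable \<Omega>"
  unfolding Dn_def by measurable

lemma J_int:
  assumes [measurable]: "F \<in> borel_measurable \<Omega>"
  shows "integral\<^sup>N (density \<Omega> Dn) F = (\<integral>\<^sup>+z. \<integral>\<^sup>+\<psi>0. \<integral>\<^sup>+\<psi>s. \<integral>\<^sup>+\<zeta>s. Dn (z, \<psi>0, \<psi>s, \<zeta>s) * F (z, \<psi>0, \<psi>s, \<zeta>s) \<partial>PR \<partial>PT \<partial>MP \<partial>MZ)"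
proof -
  have sfTR: "sigma_finite_measure (PT \<Otimes>\<^sub>M PR)" by (intro sigma_finite_pair_measure sf_inst)
  have sfPTR: "sigma_finite_measure (MP \<Otimes>\<^sub>M PT \<Otimes>\<^sub>M PR)" by (intro sigma_finite_pair_measure sf_inst sfP)
  have "integral\<^sup>N (density \<Omega> Dn) F = integral\<^sup>N \<Omega> (\<lambda>w. Dn w * F w)"
    using nn_integral_density[OF Dn_meas assms] .
  also have "\<dots> = (\<integral>\<^sup>+z. \<integral>\<^sup>+w. Dn (z, w) * F (z, w) \<partial>(MP \<Otimes>\<^sub>M PT \<Otimes>\<^sub>M PR) \<partial>MZ)"
    by (rule sigma_finite_measure.nn_integral_fst[OF sfPTR, symmetric]) measurable
  also have "\<dots> = (\<integral>\<^sup>+z. \<integral>\<^sup>+\<psi>0. \<integral>\<^sup>+w. Dn (z, \<psi>0, w) * F (z, \<psi>0, w) \<partial>(PT \<Otimes>\<^sub>M PR) \<partial>MP \<partial>MZ)"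
    apply (rule nn_integral_cong)
    apply (rule sigma_finite_measure.nn_integral_fst[OF sfTR, symmetric])
    by measurable
  also have "\<dots> = (\<integral>\<^sup>+z. \<integral>\<^sup>+\<psi>0. \<integral>\<^sup>+\<psi>s. \<integral>\<^sup>+\<zeta>s. Dn (z, \<psi>0, \<psi>s, \<zeta>s) * F (z, \<psi>0, \<psi>s, \<zeta>s) \<partial>PR \<partial>PT \<partial>MP \<partial>MZ)"
    apply (rule nn_integral_cong)+
    apply (rule sigma_finite_measure.nn_integral_fst[OF sf_inst(2), symmetric])
    by measurable
  finally show ?thesis .
qed

lemma tz_meas[measurable]: "z \<in> space MZ \<Longrightarrow> tau z \<in> borel_measurable MP"
  using measurable_compose_Pair1[OF _ tau_meas] by simp
lemma qz_meas[measurable]: "z \<in> space MZ \<Longrightarrow> q z \<in> borel_measurable MP"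
  using measurable_compose_Pair1[OF _ q_meas] by simp
lemma rz_meas[measurable]: "z \<in> space MZ \<Longrightarrow> rho z \<in> borel_measurable MR"
  using measurable_compose_Pair1[OF _ rho_meas] by simp
lemma pz_meas[measurable]: "z \<in> space MZ \<Longrightarrow> p z \<in> borel_measurable MR"
  using measurable_compose_Pair1[OF _ p_meas] by simp

definition "Aof z \<psi>0 \<psi>s = (\<Sum>k\<in>{0..K}. q z ((\<psi>s(0 := \<psi>0)) k) / tau z ((\<psi>s(0 := \<psi>0)) k)) / real (K + 1)"
definition "Bof z \<zeta>s = (\<Sum>l\<in>{1..L}. p z (\<zeta>s l) / rho z (\<zeta>s l)) / real L"

lemma prod_tau_int:
  assumes z: "z \<in> space MZ" and I: "finite I"
  shows "(\<integral>\<^sup>+x. ennreal (\<Prod>k\<in>I. tau z (x k)) \<partial>PiM I (\<lambda>_. MP)) = 1"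
proof -
  interpret PS: product_sigma_finite "\<lambda>_. MP" by (rule sf_inst)
  have "(\<integral>\<^sup>+x. ennreal (\<Prod>k\<in>I. tau z (x k)) \<partial>PiM I (\<lambda>_. MP)) = (\<integral>\<^sup>+x. (\<Prod>k\<in>I. ennreal (tau z (x k))) \<partial>PiM I (\<lambda>_. MP))"
    by (simp add: prod_ennreal tau_nonneg)
  also have "\<dots> = (\<Prod>k\<in>I. (\<integral>\<^sup>+\<psi>. ennreal (tau z \<psi>) \<partial>MP))"
    by (rule PS.product_nn_integral_prod) (use I z in auto)
  also have "\<dots> = 1" using tau_norm[OF z] by simp
  finally show ?thesis .
qed

lemma prod_rho_int:
  assumes z: "z \<in> space MZ" and I: "finite I"
  shows "(\<integral>\<^sup>+x. ennreal (\<Prod>k\<in>I. rho z (x k)) \<partial>PiM I (\<lambda>_. MR)) = 1"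
proof -
  interpret PS: product_sigma_finite "\<lambda>_. MR" by (rule sf_inst)
  have "(\<integral>\<^sup>+x. ennreal (\<Prod>k\<in>I. rho z (x k)) \<partial>PiM I (\<lambda>_. MR)) = (\<integral>\<^sup>+x. (\<Prod>k\<in>I. ennreal (rho z (x k))) \<partial>PiM I (\<lambda>_. MR))"
    by (simp add: prod_ennreal rho_nonneg)
  also have "\<dots> = (\<Prod>k\<in>I. (\<integral>\<^sup>+\<psi>. ennreal (rho z \<psi>) \<partial>MR))"
    by (rule PS.product_nn_integral_prod) (use I z in auto)
  also have "\<dots> = 1" using rho_norm[OF z] by simp
  finally show ?thesis .
qed

definition "sw (j::nat) k = (if k = 0 then j else if k = j then 0 else k)"

lemma sw_upd: "(x(0 := x j, j := x 0)) k = x (sw j k)"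
  by (auto simp: sw_def)

lemma sw_bij: "j \<in> {0..K} \<Longrightarrow> (\<Sum>k\<in>{0..K}. f (sw j k)) = (\<Sum>k\<in>{0..K}. (f k :: real))"
  by (rule sum.reindex_bij_witness[of _ "sw j" "sw j"]) (auto simp: sw_def split: if_splits)
lemma sw_bij': "j \<in> {0..K} \<Longrightarrow> (\<Prod>k\<in>{0..K}. f (sw j k)) = (\<Prod>k\<in>{0..K}. (f k :: real))"
  by (rule prod.reindex_bij_witness[of _ "sw j" "sw j"]) (auto simp: sw_def split: if_splits)

lemma sym_bound:
  assumes z: "z \<in> space MZ"
  shows "(\<integral>\<^sup>+\<psi>0. \<integral>\<^sup>+\<psi>s. ennreal (q z \<psi>0 * (\<Prod>k\<in>{1..K}. tau z (\<psi>s k)) / Aof z \<psi>0 \<psi>s) \<partial>PT \<partial>MP) \<le> 1"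
proof -
  interpret PS: product_sigma_finite "\<lambda>_. MP" by (rule sf_inst)
  note [measurable] = tz_meas[OF z] qz_meas[OF z]
  define T where "T x = (\<Prod>k\<in>{0..K}. tau z (x k))" for x :: "nat \<Rightarrow> 'psi"
  define W where "W x = (\<Sum>k\<in>{0..K}. q z (x k) / tau z (x k))" for x :: "nat \<Rightarrow> 'psi"
  define H where "H j x = ennreal (T x * (q z (x j) / tau z (x j)) / W x)" for j x
  define G where "G x = ennreal (q z (x 0) * (\<Prod>k\<in>{1..K}. tau z (x k)) / (W x / real (K + 1)))" for x
  let ?PK = "PiM {0..K} (\<lambda>_. MP)"
  have Hm[measurable]: "H j \<in> borel_measurable ?PK" if "j \<in> {0..K}" for j
    unfolding H_def T_def W_def using that by measurable
  have Gm[measurable]: "G \<in> borel_measurable ?PK"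
    unfolding G_def W_def by measurable
  have ins: "{0..K} = insert 0 {1..K}" by auto
  have "integral\<^sup>N ?PK G = (\<integral>\<^sup>+\<psi>0. \<integral>\<^sup>+\<psi>s. G (\<psi>s(0 := \<psi>0)) \<partial>PT \<partial>MP)"
    using PS.product_nn_integral_insert_rev[of "{1..K}" 0 G] Gm ins by simp
  also have "\<dots> = (\<integral>\<^sup>+\<psi>0. \<integral>\<^sup>+\<psi>s. ennreal (q z \<psi>0 * (\<Prod>k\<in>{1..K}. tau z (\<psi>s k)) / Aof z \<psi>0 \<psi>s) \<partial>PT \<partial>MP)"
  proof -
    have "G (\<psi>s(0 := \<psi>0)) = ennreal (q z \<psi>0 * (\<Prod>k\<in>{1..K}. tau z (\<psi>s k)) / Aof z \<psi>0 \<psi>s)" for \<psi>s \<psi>0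
    proof -
      have "(\<Prod>k\<in>{1..K}. tau z ((\<psi>s(0 := \<psi>0)) k)) = (\<Prod>k\<in>{1..K}. tau z (\<psi>s k))"
        by (rule prod.cong) auto
      then show ?thesis by (simp add: G_def Aof_def W_def)
    qed
    then show ?thesis by simp
  qed
  finally have eqG: "integral\<^sup>N ?PK G = (\<integral>\<^sup>+\<psi>0. \<integral>\<^sup>+\<psi>s. ennreal (q z \<psi>0 * (\<Prod>k\<in>{1..K}. tau z (\<psi>s k)) / Aof z \<psi>0 \<psi>s) \<partial>PT \<partial>MP)" .
  have Geq: "G x = of_nat (K + 1) * H 0 x" if x: "x \<in> space ?PK" for x
  proof -
    have x0: "x 0 \<in> space MP" using x by (auto simp: space_PiM PiE_iff)
    have Tx: "T x = tau z (x 0) * (\<Prod>k\<in>{1..K}. tau z (x k))"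
      unfolding T_def ins by (subst prod.insert) auto
    have "q z (x 0) * (\<Prod>k\<in>{1..K}. tau z (x k)) = T x * (q z (x 0) / tau z (x 0))"
    proof (cases "tau z (x 0) = 0")
      case True
      then show ?thesis using tau_supp[OF z x0] by simp
    next
      case False
      then show ?thesis unfolding Tx by (simp add: field_simps)
    qed
    define r where "r = T x * (q z (x 0) / tau z (x 0)) / W x"
    have r0: "0 \<le> r"
      unfolding r_def T_def W_def
      by (intro divide_nonneg_nonneg mult_nonneg_nonneg prod_nonneg sum_nonneg tau_nonneg q_nonneg; auto)
    have "q z (x 0) * (\<Prod>k\<in>{1..K}. tau z (x k)) / (W x / real (K + 1)) = real (K + 1) * r"
      unfolding r_def using \<open>q z (x 0) * (\<Prod>k\<in>{1..K}. tau z (x k)) = T x * (q z (x 0) / tau z (x 0))\<close>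
      by simp
    then have "G x = ennreal (real (K + 1) * r)" unfolding G_def by simp
    also have "\<dots> = ennreal (real (K + 1)) * ennreal r" by (rule ennreal_mult) (use r0 in auto)
    also have "\<dots> = of_nat (K + 1) * H 0 x" unfolding H_def r_def
      by (simp only: ennreal_of_nat_eq_real_of_nat)
    finally show ?thesis .
  qed
  have Hsym: "integral\<^sup>N ?PK (H j) = integral\<^sup>N ?PK (H 0)" if j: "j \<in> {0..K}" for j
  proof -
    have "H 0 (x(0 := x j, j := x 0)) = H j x" for x
    proof -
      have "T (x(0 := x j, j := x 0)) = T x" unfolding T_def sw_upd by (rule sw_bij'[OF j])
      moreover have "W (x(0 := x j, j := x 0)) = W x" unfolding W_def sw_upd by (rule sw_bij[OF j])
      moreover have "(x(0 := x j, j := x 0)) 0 = x j" by simp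
      ultimately show ?thesis unfolding H_def by simp
    qed
    then have "integral\<^sup>N ?PK (H j) = (\<integral>\<^sup>+x. H 0 (x(0 := x j, j := x 0)) \<partial>?PK)" by simp
    also have "\<dots> = integral\<^sup>N ?PK (H 0)"
      by (rule swap_inv[OF sfP]) (use j in auto)
    finally show ?thesis .
  qed
  have Hsum: "(\<Sum>j\<in>{0..K}. H j x) \<le> ennreal (T x)" for x
  proof -
    have nn: "0 \<le> T x * (q z (x j) / tau z (x j)) / W x" for j
      unfolding T_def W_def
      by (intro divide_nonneg_nonneg mult_nonneg_nonneg prod_nonneg sum_nonneg tau_nonneg q_nonneg; auto)
    have s1: "(\<Sum>j\<in>{0..K}. H j x) = ennreal (\<Sum>j\<in>{0..K}. T x * (q z (x j) / tau z (x j)) / W x)"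
      unfolding H_def using nn by (simp add: sum_ennreal)
    have s2: "(\<Sum>j\<in>{0..K}. T x * (q z (x j) / tau z (x j)) / W x) = T x * W x / W x"
      unfolding W_def by (simp only: sum_divide_distrib[symmetric] sum_distrib_left[symmetric])
    have s3: "T x * W x / W x \<le> T x"
    proof (cases "W x = 0")
      case True
      have "0 \<le> T x" unfolding T_def by (intro prod_nonneg) (simp add: tau_nonneg)
      then show ?thesis using True by simp
    next
      case False
      then show ?thesis by simp
    qed
    show ?thesis unfolding s1 s2 by (rule ennreal_leI[OF s3])
  qed
  have "(\<Sum>j\<in>{0..K}. integral\<^sup>N ?PK (H j)) = (\<Sum>j\<in>{0..K}. integral\<^sup>N ?PK (H 0))"
    by (rule sum.cong[OF refl Hsym])
  then have "of_nat (K + 1) * integral\<^sup>N ?PK (H 0) = (\<Sum>j\<in>{0..K}. integral\<^sup>N ?PK (H j))"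
    by simp
  also have "\<dots> = (\<integral>\<^sup>+x. (\<Sum>j\<in>{0..K}. H j x) \<partial>?PK)"
    by (rule nn_integral_sum[symmetric]) simp
  also have "\<dots> \<le> (\<integral>\<^sup>+x. ennreal (T x) \<partial>?PK)"
    by (rule nn_integral_mono) (rule Hsum)
  also have "\<dots> = 1" unfolding T_def by (rule prod_tau_int[OF z]) simp
  finally have le1: "of_nat (K + 1) * integral\<^sup>N ?PK (H 0) \<le> 1" .
  have "integral\<^sup>N ?PK G = (\<integral>\<^sup>+x. of_nat (K + 1) * H 0 x \<partial>?PK)"
    by (rule nn_integral_cong) (rule Geq)
  also have "\<dots> = of_nat (K + 1) * integral\<^sup>N ?PK (H 0)"
    by (rule nn_integral_cmult) simp
  finally show ?thesis using eqG le1 by simp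
qed

definition "Qm z = (\<integral>\<^sup>+\<psi>. ennreal (q z \<psi>) \<partial>MP)"
definition "Pm z = (\<integral>\<^sup>+\<zeta>. ennreal (p z \<zeta>) \<partial>MR)"
definition "gq z \<psi>0 \<psi>s = q z \<psi>0 * (\<Prod>k\<in>{1..K}. tau z (\<psi>s k)) / Aof z \<psi>0 \<psi>s"

lemma Qm_meas[measurable]: "Qm \<in> borel_measurable MZ"
proof -
  interpret P: sigma_finite_measure MP by (rule sfP)
  show ?thesis unfolding Qm_def
    by (rule P.borel_measurable_nn_integral[where f="\<lambda>z \<psi>. ennreal (q z \<psi>)"]) measurable
qed

lemma Pm_meas[measurable]: "Pm \<in> borel_measurable MZ"
proof -
  interpret R: sigma_finite_measure MR by (rule sfR)
  show ?thesis unfolding Pm_def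
    by (rule R.borel_measurable_nn_integral[where f="\<lambda>z \<psi>. ennreal (p z \<psi>)"]) measurable
qed

lemma Qm_int: "(\<integral>\<^sup>+z. Qm z \<partial>MZ) = 1"
proof -
  have "(\<integral>\<^sup>+z. \<integral>\<^sup>+\<psi>. ennreal (q (fst (z, \<psi>)) (snd (z, \<psi>))) \<partial>MP \<partial>MZ) = 1"
    using sigma_finite_measure.nn_integral_fst[OF sfP, of "\<lambda>w. ennreal (q (fst w) (snd w))" MZ] q_norm by simp
  then show ?thesis by (simp add: Qm_def)
qed

lemma Pm_int: "(\<integral>\<^sup>+z. Pm z \<partial>MZ) = 1"
proof -
  have "(\<integral>\<^sup>+z. \<integral>\<^sup>+\<psi>. ennreal (p (fst (z, \<psi>)) (snd (z, \<psi>))) \<partial>MR \<partial>MZ) = 1"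
    using sigma_finite_measure.nn_integral_fst[OF sfR, of "\<lambda>w. ennreal (p (fst w) (snd w))" MZ] p_norm by simp
  then show ?thesis by (simp add: Pm_def)
qed

lemma AE_Qm: "AE z in MZ. Qm z \<noteq> \<infinity>"
  by (rule nn_integral_PInf_AE) (auto simp: Qm_int)
lemma AE_Pm: "AE z in MZ. Pm z \<noteq> \<infinity>"
  by (rule nn_integral_PInf_AE) (auto simp: Pm_int)

lemma Aof_alt: "Aof z \<psi>0 \<psi>s = (q z \<psi>0 / tau z \<psi>0 + (\<Sum>k\<in>{1..K}. q z (\<psi>s k) / tau z (\<psi>s k))) / real (K + 1)"
proof -
  have ins: "{0..K} = insert 0 {1..K}" by auto
  have "(\<Sum>k\<in>{1..K}. q z ((\<psi>s(0 := \<psi>0)) k) / tau z ((\<psi>s(0 := \<psi>0)) k)) = (\<Sum>k\<in>{1..K}. q z (\<psi>s k) / tau z (\<psi>s k))"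
    by (rule sum.cong) auto
  then show ?thesis unfolding Aof_def ins by (subst sum.insert) auto
qed

lemma Aof_nonneg: "0 \<le> Aof z \<psi>0 \<psi>s"
  unfolding Aof_def by (intro divide_nonneg_nonneg sum_nonneg q_nonneg tau_nonneg; simp)
lemma Bof_nonneg: "0 \<le> Bof z \<zeta>s"
  unfolding Bof_def by (intro divide_nonneg_nonneg sum_nonneg p_nonneg rho_nonneg; simp)
lemma gq_nonneg: "0 \<le> gq z \<psi>0 \<psi>s"
  unfolding gq_def by (intro divide_nonneg_nonneg mult_nonneg_nonneg prod_nonneg q_nonneg tau_nonneg Aof_nonneg; simp)
lemma ptau_nonneg: "0 \<le> (\<Prod>k\<in>I. tau z (\<psi>s k))" by (intro prod_nonneg tau_nonneg)
lemma prho_nonneg: "0 \<le> (\<Prod>k\<in>I. rho z (\<psi>s k))" by (intro prod_nonneg rho_nonneg)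

lemma Aof_meas[measurable]: "(\<lambda>\<omega>. Aof (fst \<omega>) (fst (snd \<omega>)) (fst (snd (snd \<omega>)))) \<in> borel_measurable \<Omega>"
  unfolding Aof_alt by measurable
lemma Bof_meas[measurable]: "(\<lambda>\<omega>. Bof (fst \<omega>) (snd (snd (snd \<omega>)))) \<in> borel_measurable \<Omega>"
  unfolding Bof_def by measurable

lemma gq_meas: 
  assumes z: "z \<in> space MZ"
  shows "(\<lambda>w. ennreal (gq z (fst w) (snd w))) \<in> borel_measurable (MP \<Otimes>\<^sub>M PT)"
  unfolding gq_def Aof_alt using z by measurable

lemma Dn_simp: "Dn (z, \<psi>0, \<psi>s, \<zeta>s) = ennreal (q z \<psi>0 * (\<Prod>k\<in>{1..K}. tau z (\<psi>s k)) * (\<Prod>l\<in>{1..L}. rho z (\<zeta>s l)))"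
  by (simp add: Dn_def)

lemma Dn_eq: "Dn (z, \<psi>0, \<psi>s, \<zeta>s) = ennreal (q z \<psi>0) * ennreal (\<Prod>k\<in>{1..K}. tau z (\<psi>s k)) * ennreal (\<Prod>l\<in>{1..L}. rho z (\<zeta>s l))"
  by (simp add: Dn_def ennreal_mult q_nonneg ptau_nonneg prho_nonneg)

lemma rho_c: "z \<in> space MZ \<Longrightarrow> (\<integral>\<^sup>+\<zeta>s. c * ennreal (\<Prod>l\<in>{1..L}. rho z (\<zeta>s l)) \<partial>PR) = c"
  by (subst nn_integral_cmult) (auto simp: prod_rho_int)
lemma tau_c: "z \<in> space MZ \<Longrightarrow> (\<integral>\<^sup>+\<psi>s. c * ennreal (\<Prod>k\<in>{1..K}. tau z (\<psi>s k)) \<partial>PT) = c"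
  by (subst nn_integral_cmult) (auto simp: prod_tau_int)

lemma qtau_c:
  assumes z: "z \<in> space MZ"
  shows "(\<integral>\<^sup>+\<psi>0. \<integral>\<^sup>+\<psi>s. ennreal (q z \<psi>0) * ennreal (\<Prod>k\<in>{1..K}. tau z (\<psi>s k)) * c \<partial>PT \<partial>MP) = Qm z * c"
proof -
  have "(\<integral>\<^sup>+\<psi>0. \<integral>\<^sup>+\<psi>s. ennreal (q z \<psi>0) * ennreal (\<Prod>k\<in>{1..K}. tau z (\<psi>s k)) * c \<partial>PT \<partial>MP)
      = (\<integral>\<^sup>+\<psi>0. ennreal (q z \<psi>0) * c \<partial>MP)"
  proof (rule nn_integral_cong)
    fix \<psi>0
    have "(\<integral>\<^sup>+\<psi>s. ennreal (q z \<psi>0) * ennreal (\<Prod>k\<in>{1..K}. tau z (\<psi>s k)) * c \<partial>PT)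
       = (\<integral>\<^sup>+\<psi>s. (ennreal (q z \<psi>0) * c) * ennreal (\<Prod>k\<in>{1..K}. tau z (\<psi>s k)) \<partial>PT)"
      by (simp add: ac_simps)
    also have "\<dots> = ennreal (q z \<psi>0) * c" by (rule tau_c[OF z])
    finally show "(\<integral>\<^sup>+\<psi>s. ennreal (q z \<psi>0) * ennreal (\<Prod>k\<in>{1..K}. tau z (\<psi>s k)) * c \<partial>PT) = ennreal (q z \<psi>0) * c" .
  qed
  also have "\<dots> = Qm z * c" unfolding Qm_def
    by (rule nn_integral_multc) (use z in measurable)
  finally show ?thesis .
qed

lemma marg:
  assumes h[measurable]: "h \<in> borel_measurable MZ"
  shows "(\<integral>\<^sup>+\<omega>. h (fst \<omega>) \<partial>density \<Omega> Dn) = (\<integral>\<^sup>+z. Qm z * h z \<partial>MZ)"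
proof -
  have "(\<integral>\<^sup>+\<omega>. h (fst \<omega>) \<partial>density \<Omega> Dn) = (\<integral>\<^sup>+z. \<integral>\<^sup>+\<psi>0. \<integral>\<^sup>+\<psi>s. \<integral>\<^sup>+\<zeta>s. Dn (z, \<psi>0, \<psi>s, \<zeta>s) * h z \<partial>PR \<partial>PT \<partial>MP \<partial>MZ)"
    by (subst J_int) (auto)
  also have "\<dots> = (\<integral>\<^sup>+z. Qm z * h z \<partial>MZ)"
  proof (rule nn_integral_cong)
    fix z assume z: "z \<in> space MZ"
    have "(\<integral>\<^sup>+\<psi>0. \<integral>\<^sup>+\<psi>s. \<integral>\<^sup>+\<zeta>s. Dn (z, \<psi>0, \<psi>s, \<zeta>s) * h z \<partial>PR \<partial>PT \<partial>MP)
       = (\<integral>\<^sup>+\<psi>0. \<integral>\<^sup>+\<psi>s. ennreal (q z \<psi>0) * ennreal (\<Prod>k\<in>{1..K}. tau z (\<psi>s k)) * h z \<partial>PT \<partial>MP)"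
    proof (intro nn_integral_cong)
      fix \<psi>0 \<psi>s
      have eqn: "Dn (z, \<psi>0, \<psi>s, \<zeta>s) * h z = (ennreal (q z \<psi>0) * ennreal (\<Prod>k\<in>{1..K}. tau z (\<psi>s k)) * h z) * ennreal (\<Prod>l\<in>{1..L}. rho z (\<zeta>s l))" for \<zeta>s
        by (simp add: Dn_eq ac_simps)
      show "(\<integral>\<^sup>+\<zeta>s. Dn (z, \<psi>0, \<psi>s, \<zeta>s) * h z \<partial>PR) = ennreal (q z \<psi>0) * ennreal (\<Prod>k\<in>{1..K}. tau z (\<psi>s k)) * h z"
        by (simp only: eqn rho_c[OF z])
    qed
    also have "\<dots> = Qm z * h z" by (rule qtau_c[OF z])
    finally show "(\<integral>\<^sup>+\<psi>0. \<integral>\<^sup>+\<psi>s. \<integral>\<^sup>+\<zeta>s. Dn (z, \<psi>0, \<psi>s, \<zeta>s) * h z \<partial>PR \<partial>PT \<partial>MP) = Qm z * h z" .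
  qed
  finally show ?thesis .
qed

lemma L_gt0: "0 < L" using L_pos by simp

lemma Bbound:
  assumes z: "z \<in> space MZ"
  shows "(\<integral>\<^sup>+\<zeta>s. ennreal (\<Prod>l\<in>{1..L}. rho z (\<zeta>s l)) * ennreal (Bof z \<zeta>s) \<partial>PR) \<le> Pm z"
proof -
  interpret PS: product_sigma_finite "\<lambda>_. MR" by (rule sf_inst)
  note [measurable] = rz_meas[OF z] pz_meas[OF z]
  define f where "f (l::nat) (m::nat) \<zeta> = rho z \<zeta> * (if m = l then p z \<zeta> / rho z \<zeta> else 1)" for l m \<zeta>
  have f0: "0 \<le> f l m \<zeta>" for l m \<zeta> unfolding f_def
    by (auto intro!: mult_nonneg_nonneg divide_nonneg_nonneg rho_nonneg p_nonneg)
  have Lp: "0 < real L" using L_pos by simp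
  have pe: "(\<Prod>m\<in>{1..L}. f l m (\<zeta>s m)) = (\<Prod>m\<in>{1..L}. rho z (\<zeta>s m)) * (p z (\<zeta>s l) / rho z (\<zeta>s l))"
    if l: "l \<in> {1..L}" for l \<zeta>s
    unfolding f_def prod.distrib using l by (simp add: prod.delta)
  have eq: "ennreal (\<Prod>l\<in>{1..L}. rho z (\<zeta>s l)) * ennreal (Bof z \<zeta>s)
      = (\<Sum>l\<in>{1..L}. ennreal (\<Prod>m\<in>{1..L}. f l m (\<zeta>s m))) / ennreal (real L)" for \<zeta>s
  proof -
    have "ennreal (\<Prod>l\<in>{1..L}. rho z (\<zeta>s l)) * ennreal (Bof z \<zeta>s)
        = ennreal ((\<Prod>l\<in>{1..L}. rho z (\<zeta>s l)) * Bof z \<zeta>s)"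
      by (rule ennreal_mult[symmetric]) (auto intro: prho_nonneg Bof_nonneg)
    also have "(\<Prod>l\<in>{1..L}. rho z (\<zeta>s l)) * Bof z \<zeta>s = (\<Sum>l\<in>{1..L}. (\<Prod>l\<in>{1..L}. rho z (\<zeta>s l)) * (p z (\<zeta>s l) / rho z (\<zeta>s l))) / real L"
      unfolding Bof_def by (simp add: sum_distrib_left)
    also have "\<dots> = (\<Sum>l\<in>{1..L}. (\<Prod>m\<in>{1..L}. f l m (\<zeta>s m))) / real L"
    proof (intro arg_cong[where f="\<lambda>x. x / real L"] sum.cong refl)
      fix l assume "l \<in> {1..L}"
      then show "(\<Prod>l\<in>{1..L}. rho z (\<zeta>s l)) * (p z (\<zeta>s l) / rho z (\<zeta>s l)) = (\<Prod>m\<in>{1..L}. f l m (\<zeta>s m))"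
        by (rule pe[symmetric])
    qed
    also have "ennreal \<dots> = ennreal (\<Sum>l\<in>{1..L}. (\<Prod>m\<in>{1..L}. f l m (\<zeta>s m))) / ennreal (real L)"
      by (rule divide_ennreal[symmetric]) (auto intro!: sum_nonneg prod_nonneg f0 simp: Lp L_gt0)
    also have "ennreal (\<Sum>l\<in>{1..L}. (\<Prod>m\<in>{1..L}. f l m (\<zeta>s m))) = (\<Sum>l\<in>{1..L}. ennreal (\<Prod>m\<in>{1..L}. f l m (\<zeta>s m)))"
      by (rule sum_ennreal[symmetric]) (auto intro!: prod_nonneg f0)
    finally show ?thesis .
  qed
  have fm[measurable]: "f l m \<in> borel_measurable MR" for l m unfolding f_def by measurable
  have one: "(\<integral>\<^sup>+\<zeta>s. ennreal (\<Prod>m\<in>{1..L}. f l m (\<zeta>s m)) \<partial>PR) \<le> Pm z" if l: "l \<in> {1..L}" for l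
  proof -
    have "(\<integral>\<^sup>+\<zeta>s. ennreal (\<Prod>m\<in>{1..L}. f l m (\<zeta>s m)) \<partial>PR) = (\<integral>\<^sup>+\<zeta>s. (\<Prod>m\<in>{1..L}. ennreal (f l m (\<zeta>s m))) \<partial>PR)"
      by (simp add: prod_ennreal f0)
    also have "\<dots> = (\<Prod>m\<in>{1..L}. (\<integral>\<^sup>+\<zeta>. ennreal (f l m \<zeta>) \<partial>MR))"
      by (rule PS.product_nn_integral_prod) auto
    also have "\<dots> = (\<Prod>m\<in>{1..L}. if m = l then (\<integral>\<^sup>+\<zeta>. ennreal (f l l \<zeta>) \<partial>MR) else 1)"
    proof (rule prod.cong)
      fix m assume "m \<in> {1..L}"
      show "(\<integral>\<^sup>+\<zeta>. ennreal (f l m \<zeta>) \<partial>MR) = (if m = l then (\<integral>\<^sup>+\<zeta>. ennreal (f l l \<zeta>) \<partial>MR) else 1)"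
        using rho_norm[OF z] by (auto simp: f_def)
    qed simp
    also have "\<dots> = (\<integral>\<^sup>+\<zeta>. ennreal (f l l \<zeta>) \<partial>MR)" using l by (simp add: prod.delta)
    also have "\<dots> \<le> Pm z" unfolding Pm_def
    proof (rule nn_integral_mono)
      fix \<zeta>
      have "rho z \<zeta> * (p z \<zeta> / rho z \<zeta>) \<le> p z \<zeta>"
        by (cases "rho z \<zeta> = 0") (auto simp: p_nonneg)
      then show "ennreal (f l l \<zeta>) \<le> ennreal (p z \<zeta>)" by (simp add: f_def ennreal_leI)
    qed
    finally show ?thesis .
  qed
  have "(\<integral>\<^sup>+\<zeta>s. ennreal (\<Prod>l\<in>{1..L}. rho z (\<zeta>s l)) * ennreal (Bof z \<zeta>s) \<partial>PR)
     = (\<integral>\<^sup>+\<zeta>s. (\<Sum>l\<in>{1..L}. ennreal (\<Prod>m\<in>{1..L}. f l m (\<zeta>s m))) \<partial>PR) / ennreal (real L)"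
    unfolding eq by (rule nn_integral_divide) measurable
  also have "\<dots> = (\<Sum>l\<in>{1..L}. (\<integral>\<^sup>+\<zeta>s. ennreal (\<Prod>m\<in>{1..L}. f l m (\<zeta>s m)) \<partial>PR)) / ennreal (real L)"
    by (subst nn_integral_sum) auto
  also have "\<dots> \<le> (\<Sum>l\<in>{1..L}. Pm z) / ennreal (real L)"
    by (intro divide_right_mono_ennreal sum_mono one)
  also have "\<dots> = Pm z"
  proof -
    have "(\<Sum>l\<in>{1..L}. Pm z) = ennreal (real L) * Pm z"
      by (simp add: ennreal_of_nat_eq_real_of_nat)
    moreover have "ennreal (real L) \<noteq> 0" "ennreal (real L) \<noteq> top" using L_gt0 by auto
    ultimately show ?thesis by (simp add: mult.commute[of "ennreal (real L)"] ennreal_mult_divide_eq)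
  qed
  finally show ?thesis .
qed

lemma gq_cmult:
  assumes z: "z \<in> space MZ"
  shows "(\<integral>\<^sup>+\<psi>0. \<integral>\<^sup>+\<psi>s. c * ennreal (gq z \<psi>0 \<psi>s) \<partial>PT \<partial>MP) \<le> c"
proof -
  interpret T: sigma_finite_measure PT by (rule sf_inst)
  have gm: "(\<lambda>w. ennreal (gq z (fst w) (snd w))) \<in> borel_measurable (MP \<Otimes>\<^sub>M PT)" by (rule gq_meas[OF z])
  have gm1: "(\<lambda>\<psi>s. ennreal (gq z \<psi>0 \<psi>s)) \<in> borel_measurable PT" if "\<psi>0 \<in> space MP" for \<psi>0
    using measurable_compose_Pair1[OF that gm] by simp
  have gm2: "(\<lambda>\<psi>0. \<integral>\<^sup>+\<psi>s. ennreal (gq z \<psi>0 \<psi>s) \<partial>PT) \<in> borel_measurable MP"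
    by (rule T.borel_measurable_nn_integral) (use gm in \<open>simp add: case_prod_beta'\<close>)
  have "(\<integral>\<^sup>+\<psi>0. \<integral>\<^sup>+\<psi>s. c * ennreal (gq z \<psi>0 \<psi>s) \<partial>PT \<partial>MP) = (\<integral>\<^sup>+\<psi>0. c * \<integral>\<^sup>+\<psi>s. ennreal (gq z \<psi>0 \<psi>s) \<partial>PT \<partial>MP)"
    by (rule nn_integral_cong) (rule nn_integral_cmult[OF gm1])
  also have "\<dots> = c * (\<integral>\<^sup>+\<psi>0. \<integral>\<^sup>+\<psi>s. ennreal (gq z \<psi>0 \<psi>s) \<partial>PT \<partial>MP)"
    by (rule nn_integral_cmult[OF gm2])
  also have "\<dots> \<le> c * 1"
    using sym_bound[OF z] unfolding gq_def by (intro mult_left_mono) auto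
  finally show ?thesis by simp
qed

lemma ennreal_div_meas:
  assumes [measurable]: "f \<in> borel_measurable M" "g \<in> borel_measurable M"
  shows "(\<lambda>x. ennreal (f x / g x)) \<in> borel_measurable M"
  by measurable

lemma Qfst_meas[measurable]: "(\<lambda>\<omega>. enn2real (Qm (fst \<omega>))) \<in> borel_measurable \<Omega>"
  by (rule borel_measurable_enn2real[OF measurable_compose[OF measurable_fst Qm_meas]])
lemma Pfst_meas[measurable]: "(\<lambda>\<omega>. enn2real (Pm (fst \<omega>))) \<in> borel_measurable \<Omega>"
  by (rule borel_measurable_enn2real[OF measurable_compose[OF measurable_fst Pm_meas]])

lemma U_meas[measurable]: "(\<lambda>\<omega>. ennreal (enn2real (Qm (fst \<omega>)) / Aof (fst \<omega>) (fst (snd \<omega>)) (fst (snd (snd \<omega>))))) \<in> borel_measurable \<Omega>"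
  by (rule ennreal_div_meas[OF Qfst_meas Aof_meas])

lemma u_bound:
  "(\<integral>\<^sup>+\<omega>. ennreal (enn2real (Qm (fst \<omega>)) / Aof (fst \<omega>) (fst (snd \<omega>)) (fst (snd (snd \<omega>)))) \<partial>density \<Omega> Dn) \<le> 1"
proof -
  have "(\<integral>\<^sup>+\<omega>. ennreal (enn2real (Qm (fst \<omega>)) / Aof (fst \<omega>) (fst (snd \<omega>)) (fst (snd (snd \<omega>)))) \<partial>density \<Omega> Dn)
    = (\<integral>\<^sup>+z. \<integral>\<^sup>+\<psi>0. \<integral>\<^sup>+\<psi>s. \<integral>\<^sup>+\<zeta>s. Dn (z, \<psi>0, \<psi>s, \<zeta>s) * ennreal (enn2real (Qm z) / Aof z \<psi>0 \<psi>s) \<partial>PR \<partial>PT \<partial>MP \<partial>MZ)"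
    by (subst J_int[OF U_meas]) simp
  also have "\<dots> \<le> (\<integral>\<^sup>+z. ennreal (enn2real (Qm z)) \<partial>MZ)"
  proof (rule nn_integral_mono)
    fix z assume z: "z \<in> space MZ"
    have "(\<integral>\<^sup>+\<psi>0. \<integral>\<^sup>+\<psi>s. \<integral>\<^sup>+\<zeta>s. Dn (z, \<psi>0, \<psi>s, \<zeta>s) * ennreal (enn2real (Qm z) / Aof z \<psi>0 \<psi>s) \<partial>PR \<partial>PT \<partial>MP)
      = (\<integral>\<^sup>+\<psi>0. \<integral>\<^sup>+\<psi>s. ennreal (enn2real (Qm z)) * ennreal (gq z \<psi>0 \<psi>s) \<partial>PT \<partial>MP)"
    proof (intro nn_integral_cong)
      fix \<psi>0 \<psi>s
      have eqn: "Dn (z, \<psi>0, \<psi>s, \<zeta>s) * ennreal (enn2real (Qm z) / Aof z \<psi>0 \<psi>s)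
          = (ennreal (enn2real (Qm z)) * ennreal (gq z \<psi>0 \<psi>s)) * ennreal (\<Prod>l\<in>{1..L}. rho z (\<zeta>s l))" for \<zeta>s
      proof -
        have "Dn (z, \<psi>0, \<psi>s, \<zeta>s) * ennreal (enn2real (Qm z) / Aof z \<psi>0 \<psi>s)
           = ennreal (q z \<psi>0 * (\<Prod>k\<in>{1..K}. tau z (\<psi>s k)) * (\<Prod>l\<in>{1..L}. rho z (\<zeta>s l)) * (enn2real (Qm z) / Aof z \<psi>0 \<psi>s))"
          unfolding Dn_simp
          by (rule ennreal_mult[symmetric]) (auto intro!: mult_nonneg_nonneg divide_nonneg_nonneg prod_nonneg q_nonneg tau_nonneg rho_nonneg Aof_nonneg enn2real_nonneg)
        also have "q z \<psi>0 * (\<Prod>k\<in>{1..K}. tau z (\<psi>s k)) * (\<Prod>l\<in>{1..L}. rho z (\<zeta>s l)) * (enn2real (Qm z) / Aof z \<psi>0 \<psi>s)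
           = (enn2real (Qm z) * gq z \<psi>0 \<psi>s) * (\<Prod>l\<in>{1..L}. rho z (\<zeta>s l))"
          unfolding gq_def by simp
        also have "ennreal \<dots> = (ennreal (enn2real (Qm z)) * ennreal (gq z \<psi>0 \<psi>s)) * ennreal (\<Prod>l\<in>{1..L}. rho z (\<zeta>s l))"
          by (simp add: ennreal_mult gq_nonneg prho_nonneg)
        finally show ?thesis .
      qed
      show "(\<integral>\<^sup>+\<zeta>s. Dn (z, \<psi>0, \<psi>s, \<zeta>s) * ennreal (enn2real (Qm z) / Aof z \<psi>0 \<psi>s) \<partial>PR)
          = ennreal (enn2real (Qm z)) * ennreal (gq z \<psi>0 \<psi>s)"
        by (simp only: eqn rho_c[OF z])
    qed
    also have "\<dots> \<le> ennreal (enn2real (Qm z))" by (rule gq_cmult[OF z])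
    finally show "(\<integral>\<^sup>+\<psi>0. \<integral>\<^sup>+\<psi>s. \<integral>\<^sup>+\<zeta>s. Dn (z, \<psi>0, \<psi>s, \<zeta>s) * ennreal (enn2real (Qm z) / Aof z \<psi>0 \<psi>s) \<partial>PR \<partial>PT \<partial>MP)
       \<le> ennreal (enn2real (Qm z))" .
  qed
  also have "\<dots> \<le> (\<integral>\<^sup>+z. Qm z \<partial>MZ)"
    by (rule nn_integral_mono) (simp add: ennreal_enn2real_if)
  finally show ?thesis by (simp add: Qm_int)
qed

lemma PB_meas:
  assumes z: "z \<in> space MZ"
  shows "(\<lambda>\<zeta>s. ennreal (\<Prod>l\<in>{1..L}. rho z (\<zeta>s l)) * ennreal (Bof z \<zeta>s)) \<in> borel_measurable PR"
proof -
  note [measurable] = rz_meas[OF z] pz_meas[OF z]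
  show ?thesis unfolding Bof_def by measurable
qed

lemma ennreal_div2_meas:
  assumes [measurable]: "f \<in> borel_measurable M" "g \<in> borel_measurable M"
  shows "(\<lambda>x. ennreal (f x) / ennreal (g x)) \<in> borel_measurable M"
  by measurable

lemma V_meas[measurable]: "(\<lambda>\<omega>. ennreal (Bof (fst \<omega>) (snd (snd (snd \<omega>)))) / ennreal (enn2real (Pm (fst \<omega>)))) \<in> borel_measurable \<Omega>"
  by (rule ennreal_div2_meas[OF Bof_meas Pfst_meas])
lemma R_meas[measurable]: "(\<lambda>\<omega>. ennreal (Bof (fst \<omega>) (snd (snd (snd \<omega>))) / Aof (fst \<omega>) (fst (snd \<omega>)) (fst (snd (snd \<omega>))))) \<in> borel_measurable \<Omega>"
  by (rule ennreal_div_meas[OF Bof_meas Aof_meas])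

lemma v_bound:
  "(\<integral>\<^sup>+\<omega>. ennreal (Bof (fst \<omega>) (snd (snd (snd \<omega>)))) / ennreal (enn2real (Pm (fst \<omega>))) \<partial>density \<Omega> Dn) \<le> 1"
proof -
  have "(\<integral>\<^sup>+\<omega>. ennreal (Bof (fst \<omega>) (snd (snd (snd \<omega>)))) / ennreal (enn2real (Pm (fst \<omega>))) \<partial>density \<Omega> Dn)
    = (\<integral>\<^sup>+z. \<integral>\<^sup>+\<psi>0. \<integral>\<^sup>+\<psi>s. \<integral>\<^sup>+\<zeta>s. Dn (z, \<psi>0, \<psi>s, \<zeta>s) * (ennreal (Bof z \<zeta>s) / ennreal (enn2real (Pm z))) \<partial>PR \<partial>PT \<partial>MP \<partial>MZ)"
    by (subst J_int[OF V_meas]) simp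
  also have "\<dots> \<le> (\<integral>\<^sup>+z. Qm z * (Pm z / ennreal (enn2real (Pm z))) \<partial>MZ)"
  proof (rule nn_integral_mono)
    fix z assume z: "z \<in> space MZ"
    define c where "c = ennreal (enn2real (Pm z))"
    note [measurable] = PB_meas[OF z]
    have step: "(\<integral>\<^sup>+\<zeta>s. Dn (z, \<psi>0, \<psi>s, \<zeta>s) * (ennreal (Bof z \<zeta>s) / c) \<partial>PR)
       \<le> ennreal (q z \<psi>0) * ennreal (\<Prod>k\<in>{1..K}. tau z (\<psi>s k)) * (Pm z / c)" for \<psi>0 \<psi>s
    proof -
      have "(\<integral>\<^sup>+\<zeta>s. Dn (z, \<psi>0, \<psi>s, \<zeta>s) * (ennreal (Bof z \<zeta>s) / c) \<partial>PR)
         = (\<integral>\<^sup>+\<zeta>s. (ennreal (q z \<psi>0) * ennreal (\<Prod>k\<in>{1..K}. tau z (\<psi>s k))) *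
                 ((ennreal (\<Prod>l\<in>{1..L}. rho z (\<zeta>s l)) * ennreal (Bof z \<zeta>s)) / c) \<partial>PR)"
        by (intro nn_integral_cong) (simp add: Dn_eq divide_ennreal_def ac_simps)
      also have "\<dots> = (ennreal (q z \<psi>0) * ennreal (\<Prod>k\<in>{1..K}. tau z (\<psi>s k))) *
                 (\<integral>\<^sup>+\<zeta>s. (ennreal (\<Prod>l\<in>{1..L}. rho z (\<zeta>s l)) * ennreal (Bof z \<zeta>s)) / c \<partial>PR)"
        by (rule nn_integral_cmult) measurable
      also have "\<dots> = (ennreal (q z \<psi>0) * ennreal (\<Prod>k\<in>{1..K}. tau z (\<psi>s k))) *
                 ((\<integral>\<^sup>+\<zeta>s. ennreal (\<Prod>l\<in>{1..L}. rho z (\<zeta>s l)) * ennreal (Bof z \<zeta>s) \<partial>PR) / c)"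
        by (subst nn_integral_divide[OF PB_meas[OF z]]) (rule refl)
      also have "\<dots> \<le> ennreal (q z \<psi>0) * ennreal (\<Prod>k\<in>{1..K}. tau z (\<psi>s k)) * (Pm z / c)"
        by (intro mult_left_mono divide_right_mono_ennreal Bbound[OF z]) auto
      finally show ?thesis .
    qed
    have "(\<integral>\<^sup>+\<psi>0. \<integral>\<^sup>+\<psi>s. \<integral>\<^sup>+\<zeta>s. Dn (z, \<psi>0, \<psi>s, \<zeta>s) * (ennreal (Bof z \<zeta>s) / c) \<partial>PR \<partial>PT \<partial>MP)
       \<le> (\<integral>\<^sup>+\<psi>0. \<integral>\<^sup>+\<psi>s. ennreal (q z \<psi>0) * ennreal (\<Prod>k\<in>{1..K}. tau z (\<psi>s k)) * (Pm z / c) \<partial>PT \<partial>MP)"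
      by (intro nn_integral_mono step)
    also have "\<dots> = Qm z * (Pm z / c)" by (rule qtau_c[OF z])
    finally show "(\<integral>\<^sup>+\<psi>0. \<integral>\<^sup>+\<psi>s. \<integral>\<^sup>+\<zeta>s. Dn (z, \<psi>0, \<psi>s, \<zeta>s) * (ennreal (Bof z \<zeta>s) / ennreal (enn2real (Pm z))) \<partial>PR \<partial>PT \<partial>MP)
       \<le> Qm z * (Pm z / ennreal (enn2real (Pm z)))" by (simp add: c_def)
  qed
  also have "\<dots> \<le> (\<integral>\<^sup>+z. Qm z \<partial>MZ)"
  proof (rule nn_integral_mono_AE)
    show "AE z in MZ. Qm z * (Pm z / ennreal (enn2real (Pm z))) \<le> Qm z"
      using AE_Pm
    proof eventually_elim
      fix z assume "Pm z \<noteq> \<infinity>"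
      then have "Pm z / ennreal (enn2real (Pm z)) \<le> 1"
        by (cases "Pm z = 0") (auto simp: less_top)
      then show "Qm z * (Pm z / ennreal (enn2real (Pm z))) \<le> Qm z"
        using mult_left_mono[of _ 1 "Qm z"] by simp
    qed
  qed
  finally show ?thesis by (simp add: Qm_int)
qed

lemma r_bound:
  "(\<integral>\<^sup>+\<omega>. ennreal (Bof (fst \<omega>) (snd (snd (snd \<omega>))) / Aof (fst \<omega>) (fst (snd \<omega>)) (fst (snd (snd \<omega>)))) \<partial>density \<Omega> Dn) \<le> 1"
proof -
  have "(\<integral>\<^sup>+\<omega>. ennreal (Bof (fst \<omega>) (snd (snd (snd \<omega>))) / Aof (fst \<omega>) (fst (snd \<omega>)) (fst (snd (snd \<omega>)))) \<partial>density \<Omega> Dn)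
    = (\<integral>\<^sup>+z. \<integral>\<^sup>+\<psi>0. \<integral>\<^sup>+\<psi>s. \<integral>\<^sup>+\<zeta>s. Dn (z, \<psi>0, \<psi>s, \<zeta>s) * ennreal (Bof z \<zeta>s / Aof z \<psi>0 \<psi>s) \<partial>PR \<partial>PT \<partial>MP \<partial>MZ)"
    by (subst J_int[OF R_meas]) simp
  also have "\<dots> \<le> (\<integral>\<^sup>+z. Pm z \<partial>MZ)"
  proof (rule nn_integral_mono)
    fix z assume z: "z \<in> space MZ"
    have step: "(\<integral>\<^sup>+\<zeta>s. Dn (z, \<psi>0, \<psi>s, \<zeta>s) * ennreal (Bof z \<zeta>s / Aof z \<psi>0 \<psi>s) \<partial>PR)
       \<le> Pm z * ennreal (gq z \<psi>0 \<psi>s)" for \<psi>0 \<psi>s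
    proof -
      have eq: "Dn (z, \<psi>0, \<psi>s, \<zeta>s) * ennreal (Bof z \<zeta>s / Aof z \<psi>0 \<psi>s)
         = ennreal (gq z \<psi>0 \<psi>s) * (ennreal (\<Prod>l\<in>{1..L}. rho z (\<zeta>s l)) * ennreal (Bof z \<zeta>s))" for \<zeta>s
      proof -
        have "Dn (z, \<psi>0, \<psi>s, \<zeta>s) * ennreal (Bof z \<zeta>s / Aof z \<psi>0 \<psi>s)
           = ennreal (q z \<psi>0 * (\<Prod>k\<in>{1..K}. tau z (\<psi>s k)) * (\<Prod>l\<in>{1..L}. rho z (\<zeta>s l)) * (Bof z \<zeta>s / Aof z \<psi>0 \<psi>s))"
          unfolding Dn_simp
          by (rule ennreal_mult[symmetric]) (auto intro!: mult_nonneg_nonneg divide_nonneg_nonneg prod_nonneg q_nonneg tau_nonneg rho_nonneg Aof_nonneg Bof_nonneg)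
        also have "q z \<psi>0 * (\<Prod>k\<in>{1..K}. tau z (\<psi>s k)) * (\<Prod>l\<in>{1..L}. rho z (\<zeta>s l)) * (Bof z \<zeta>s / Aof z \<psi>0 \<psi>s)
           = gq z \<psi>0 \<psi>s * ((\<Prod>l\<in>{1..L}. rho z (\<zeta>s l)) * Bof z \<zeta>s)"
          unfolding gq_def by simp
        also have "ennreal \<dots> = ennreal (gq z \<psi>0 \<psi>s) * (ennreal (\<Prod>l\<in>{1..L}. rho z (\<zeta>s l)) * ennreal (Bof z \<zeta>s))"
          by (simp add: ennreal_mult gq_nonneg prho_nonneg Bof_nonneg)
        finally show ?thesis .
      qed
      have "(\<integral>\<^sup>+\<zeta>s. Dn (z, \<psi>0, \<psi>s, \<zeta>s) * ennreal (Bof z \<zeta>s / Aof z \<psi>0 \<psi>s) \<partial>PR)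
          = ennreal (gq z \<psi>0 \<psi>s) * (\<integral>\<^sup>+\<zeta>s. ennreal (\<Prod>l\<in>{1..L}. rho z (\<zeta>s l)) * ennreal (Bof z \<zeta>s) \<partial>PR)"
        unfolding eq by (rule nn_integral_cmult[OF PB_meas[OF z]])
      also have "\<dots> \<le> ennreal (gq z \<psi>0 \<psi>s) * Pm z"
        by (intro mult_left_mono Bbound[OF z]) auto
      finally show ?thesis by (simp add: mult.commute)
    qed
    have "(\<integral>\<^sup>+\<psi>0. \<integral>\<^sup>+\<psi>s. \<integral>\<^sup>+\<zeta>s. Dn (z, \<psi>0, \<psi>s, \<zeta>s) * ennreal (Bof z \<zeta>s / Aof z \<psi>0 \<psi>s) \<partial>PR \<partial>PT \<partial>MP)
       \<le> (\<integral>\<^sup>+\<psi>0. \<integral>\<^sup>+\<psi>s. Pm z * ennreal (gq z \<psi>0 \<psi>s) \<partial>PT \<partial>MP)"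
      by (intro nn_integral_mono step)
    also have "\<dots> \<le> Pm z" by (rule gq_cmult[OF z])
    finally show "(\<integral>\<^sup>+\<psi>0. \<integral>\<^sup>+\<psi>s. \<integral>\<^sup>+\<zeta>s. Dn (z, \<psi>0, \<psi>s, \<zeta>s) * ennreal (Bof z \<zeta>s / Aof z \<psi>0 \<psi>s) \<partial>PR \<partial>PT \<partial>MP) \<le> Pm z" .
  qed
  finally show ?thesis by (simp add: Pm_int)
qed

lemma AE_good:
  "AE \<omega> in density \<Omega> Dn. fst \<omega> \<in> space MZ \<and> 0 < Aof (fst \<omega>) (fst (snd \<omega>)) (fst (snd (snd \<omega>)))
      \<and> Qm (fst \<omega>) \<noteq> 0 \<and> Qm (fst \<omega>) \<noteq> \<infinity>"
proof -
  have A1: "AE \<omega> in density \<Omega> Dn. fst \<omega> \<in> space MZ \<and> 0 < Aof (fst \<omega>) (fst (snd \<omega>)) (fst (snd (snd \<omega>)))"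
  proof (subst AE_density[OF Dn_meas], rule AE_I2, safe)
    fix \<omega> assume \<omega>: "\<omega> \<in> space \<Omega>"
    then show "fst \<omega> \<in> space MZ" by (auto simp: space_pair_measure)
    assume pos: "0 < Dn \<omega>"
    obtain z \<psi>0 \<psi>s \<zeta>s where w: "\<omega> = (z, \<psi>0, \<psi>s, \<zeta>s)" by (cases \<omega>) auto
    have zs: "z \<in> space MZ" "\<psi>0 \<in> space MP" using \<omega> w by (auto simp: space_pair_measure)
    have "q z \<psi>0 \<noteq> 0" using pos w by (auto simp: Dn_def)
    then have qp: "0 < q z \<psi>0" using q_nonneg[of z \<psi>0] by simp
    have "tau z \<psi>0 \<noteq> 0"
    proof
      assume "tau z \<psi>0 = 0"
      then have "q z \<psi>0 = 0" by (rule tau_supp[OF zs])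
      with qp show False by simp
    qed
    then have "0 < q z \<psi>0 / tau z \<psi>0" using qp tau_nonneg[of z \<psi>0] by simp
    moreover have "0 \<le> (\<Sum>k\<in>{1..K}. q z (\<psi>s k) / tau z (\<psi>s k))"
      by (intro sum_nonneg divide_nonneg_nonneg q_nonneg tau_nonneg)
    ultimately show "0 < Aof (fst \<omega>) (fst (snd \<omega>)) (fst (snd (snd \<omega>)))"
      unfolding w Aof_alt by (intro divide_pos_pos) auto
  qed
  define Bd where "Bd = {z \<in> space MZ. Qm z = 0 \<or> Qm z = \<infinity>}"
  have Bd[measurable]: "Bd \<in> sets MZ" unfolding Bd_def by measurable
  have i1: "(\<integral>\<^sup>+\<omega>. indicator Bd (fst \<omega>) \<partial>density \<Omega> Dn) = (\<integral>\<^sup>+z. Qm z * indicator Bd z \<partial>MZ)"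
    by (rule marg) measurable
  have mz: "(\<lambda>z. Qm z * indicator Bd z) \<in> borel_measurable MZ" by measurable
  have "AE z in MZ. Qm z * indicator Bd z = 0"
    using AE_Qm
  proof eventually_elim
    fix z assume "Qm z \<noteq> \<infinity>"
    then show "Qm z * indicator Bd z = 0" by (cases "z \<in> Bd") (auto simp: Bd_def)
  qed
  then have i2: "(\<integral>\<^sup>+z. Qm z * indicator Bd z \<partial>MZ) = 0"
    using nn_integral_0_iff_AE[OF mz] by simp
  have m: "(\<lambda>\<omega>. indicator Bd (fst \<omega>) :: ennreal) \<in> borel_measurable (density \<Omega> Dn)"
    by (subst measurable_density_eq1) measurable
  have "AE \<omega> in density \<Omega> Dn. indicator Bd (fst \<omega>) = (0::ennreal)"
    using nn_integral_0_iff_AE[OF m] i1 i2 by simp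
  with A1 show ?thesis
  proof eventually_elim
    fix \<omega> assume H1: "fst \<omega> \<in> space MZ \<and> 0 < Aof (fst \<omega>) (fst (snd \<omega>)) (fst (snd (snd \<omega>)))"
      and H2: "indicator Bd (fst \<omega>) = (0::ennreal)"
    have "fst \<omega> \<notin> Bd" using H2 by (auto split: split_indicator)
    then show "fst \<omega> \<in> space MZ \<and> 0 < Aof (fst \<omega>) (fst (snd \<omega>)) (fst (snd (snd \<omega>)))
      \<and> Qm (fst \<omega>) \<noteq> 0 \<and> Qm (fst \<omega>) \<noteq> \<infinity>" using H1 by (auto simp: Bd_def)
  qed
qed


lemma elog_meas:
  assumes [measurable]: "f \<in> borel_measurable M" "g \<in> borel_measurable M"
  shows "(\<lambda>x. elog_ratio (f x) (g x)) \<in> borel_measurable M"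
  unfolding elog_ratio_def by measurable

lemma main:
  "KL_div MZ (\<lambda>z. enn2real (\<integral>\<^sup>+ \<psi>. ennreal (q z \<psi>) \<partial>MP)) (\<lambda>z. enn2real (\<integral>\<^sup>+ \<zeta>. ennreal (p z \<zeta>) \<partial>MR))
   \<le> ext_expectation (density \<Omega> Dn)
        (\<lambda>\<omega>. elog_ratio (Aof (fst \<omega>) (fst (snd \<omega>)) (fst (snd (snd \<omega>)))) (Bof (fst \<omega>) (snd (snd (snd \<omega>)))))"
proof -
  let ?J = "density \<Omega> Dn"
  let ?QD = "density MZ (\<lambda>z. ennreal (enn2real (Qm z)))"
  define fJ where "fJ \<omega> = elog_ratio (Aof (fst \<omega>) (fst (snd \<omega>)) (fst (snd (snd \<omega>)))) (Bof (fst \<omega>) (snd (snd (snd \<omega>))))" for \<omega>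
  define gz where "gz z = elog_ratio (enn2real (Qm z)) (enn2real (Pm z))" for z
  define U where "U (\<omega> :: 'z \<times> 'psi \<times> (nat \<Rightarrow> 'psi) \<times> (nat \<Rightarrow> 'zeta)) = ennreal (enn2real (Qm (fst \<omega>)) / Aof (fst \<omega>) (fst (snd \<omega>)) (fst (snd (snd \<omega>))))" for \<omega>
  define V where "V (\<omega> :: 'z \<times> 'psi \<times> (nat \<Rightarrow> 'psi) \<times> (nat \<Rightarrow> 'zeta)) = ennreal (Bof (fst \<omega>) (snd (snd (snd \<omega>)))) / ennreal (enn2real (Pm (fst \<omega>)))" for \<omega>
  have fJm[measurable]: "fJ \<in> borel_measurable \<Omega>" unfolding fJ_def by (rule elog_meas[OF Aof_meas Bof_meas])
  have gzm[measurable]: "gz \<in> borel_measurable MZ" unfolding gz_def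
    by (rule elog_meas) measurable
  have Um[measurable]: "U \<in> borel_measurable \<Omega>" unfolding U_def by (rule U_meas)
  have Vm[measurable]: "V \<in> borel_measurable \<Omega>" unfolding V_def by (rule V_meas)
  have gJm[measurable]: "(\<lambda>\<omega>. gz (fst \<omega>)) \<in> borel_measurable \<Omega>" by measurable
  define Pf where "Pf = (\<integral>\<^sup>+\<omega>. e2ennreal (fJ \<omega>) \<partial>?J)"
  define Nf where "Nf = (\<integral>\<^sup>+\<omega>. e2ennreal (- fJ \<omega>) \<partial>?J)"
  define Pg where "Pg = (\<integral>\<^sup>+z. e2ennreal (gz z) \<partial>?QD)"
  define Ng where "Ng = (\<integral>\<^sup>+z. e2ennreal (- gz z) \<partial>?QD)"
  have eqQ: "(\<lambda>z. enn2real (\<integral>\<^sup>+ \<psi>. ennreal (q z \<psi>) \<partial>MP)) = (\<lambda>z. enn2real (Qm z))" by (simp add: Qm_def)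
  have eqP: "(\<lambda>z. enn2real (\<integral>\<^sup>+ \<zeta>. ennreal (p z \<zeta>) \<partial>MR)) = (\<lambda>z. enn2real (Pm z))" by (simp add: Pm_def)
  have lhs: "KL_div MZ (\<lambda>z. enn2real (\<integral>\<^sup>+ \<psi>. ennreal (q z \<psi>) \<partial>MP)) (\<lambda>z. enn2real (\<integral>\<^sup>+ \<zeta>. ennreal (p z \<zeta>) \<partial>MR))
      = enn2ereal Pg - enn2ereal Ng"
    unfolding KL_div_def ext_expectation_def eqQ eqP Pg_def Ng_def gz_def ..
  have rhs: "ext_expectation ?J (\<lambda>\<omega>. elog_ratio (Aof (fst \<omega>) (fst (snd \<omega>)) (fst (snd (snd \<omega>)))) (Bof (fst \<omega>) (snd (snd (snd \<omega>)))))
      = enn2ereal Pf - enn2ereal Nf"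
    unfolding ext_expectation_def Pf_def Nf_def fJ_def ..
  have qdm: "(\<lambda>z. ennreal (enn2real (Qm z))) \<in> borel_measurable MZ" by measurable
  have dens: "(\<integral>\<^sup>+z. h z \<partial>?QD) = (\<integral>\<^sup>+z. ennreal (enn2real (Qm z)) * h z \<partial>MZ)"
    if hm: "h \<in> borel_measurable MZ" for h
    using nn_integral_density[OF qdm hm] .
  have transfer: "(\<integral>\<^sup>+z. h z \<partial>?QD) = (\<integral>\<^sup>+\<omega>. h (fst \<omega>) \<partial>?J)" if hm: "h \<in> borel_measurable MZ" for h
  proof -
    have "(\<integral>\<^sup>+z. h z \<partial>?QD) = (\<integral>\<^sup>+z. ennreal (enn2real (Qm z)) * h z \<partial>MZ)" by (rule dens[OF hm])
    also have "\<dots> = (\<integral>\<^sup>+z. Qm z * h z \<partial>MZ)"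
      by (rule nn_integral_cong_AE) (use AE_Qm in \<open>eventually_elim, simp add: less_top\<close>)
    also have "\<dots> = (\<integral>\<^sup>+\<omega>. h (fst \<omega>) \<partial>?J)" by (rule marg[symmetric, OF hm])
    finally show ?thesis .
  qed
  have Pg': "Pg = (\<integral>\<^sup>+\<omega>. e2ennreal (gz (fst \<omega>)) \<partial>?J)" unfolding Pg_def by (rule transfer) measurable
  have Ng': "Ng = (\<integral>\<^sup>+\<omega>. e2ennreal (- gz (fst \<omega>)) \<partial>?J)" unfolding Ng_def by (rule transfer) measurable
  have Ng1: "Ng \<le> 1"
  proof -
    have "Ng = (\<integral>\<^sup>+z. ennreal (enn2real (Qm z)) * e2ennreal (- gz z) \<partial>MZ)" unfolding Ng_def by (rule dens) measurable
    also have "\<dots> \<le> (\<integral>\<^sup>+z. ennreal (enn2real (Pm z)) \<partial>MZ)"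
      unfolding gz_def by (intro nn_integral_mono pw3) auto
    also have "\<dots> \<le> (\<integral>\<^sup>+z. Pm z \<partial>MZ)"
      by (intro nn_integral_mono) (simp add: ennreal_enn2real_if)
    finally show ?thesis by (simp add: Pm_int)
  qed
  have Nf1: "Nf \<le> 1"
  proof -
    have "Nf \<le> (\<integral>\<^sup>+\<omega>. ennreal (Bof (fst \<omega>) (snd (snd (snd \<omega>))) / Aof (fst \<omega>) (fst (snd \<omega>)) (fst (snd (snd \<omega>)))) \<partial>?J)"
      unfolding Nf_def
    proof (rule nn_integral_mono_AE)
      show "AE \<omega> in ?J. e2ennreal (- fJ \<omega>) \<le> ennreal (Bof (fst \<omega>) (snd (snd (snd \<omega>))) / Aof (fst \<omega>) (fst (snd \<omega>)) (fst (snd (snd \<omega>))))"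
        using AE_good by eventually_elim (auto simp: fJ_def intro!: pw2 Bof_nonneg)
    qed
    also have "\<dots> \<le> 1" by (rule r_bound)
    finally show ?thesis .
  qed
  have one: "(\<integral>\<^sup>+\<omega>. 1 \<partial>?J) = 1" using marg[of "\<lambda>_. 1"] Qm_int by simp
  have two: "(\<integral>\<^sup>+\<omega>. 2 \<partial>?J) = 2"
  proof -
    have "(\<integral>\<^sup>+\<omega>. 2 * 1 \<partial>?J) = 2 * (\<integral>\<^sup>+\<omega>. 1 \<partial>?J)" by (rule nn_integral_cmult) simp
    then show ?thesis using one by simp
  qed
  have AEp: "AE \<omega> in ?J. e2ennreal (- fJ \<omega>) + e2ennreal (gz (fst \<omega>)) + 2
      \<le> e2ennreal (fJ \<omega>) + e2ennreal (- gz (fst \<omega>)) + U \<omega> + V \<omega>"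
    using AE_good
  proof eventually_elim
    fix \<omega> :: "'z \<times> 'psi \<times> (nat \<Rightarrow> 'psi) \<times> (nat \<Rightarrow> 'zeta)"
    assume H: "fst \<omega> \<in> space MZ \<and> 0 < Aof (fst \<omega>) (fst (snd \<omega>)) (fst (snd (snd \<omega>)))
      \<and> Qm (fst \<omega>) \<noteq> 0 \<and> Qm (fst \<omega>) \<noteq> \<infinity>"
    have Q: "0 < enn2real (Qm (fst \<omega>))" using H by (simp add: enn2real_positive_iff less_top[symmetric] zero_less_iff_neq_zero)
    have A: "0 < Aof (fst \<omega>) (fst (snd \<omega>)) (fst (snd (snd \<omega>)))" using H by simp
    show "e2ennreal (- fJ \<omega>) + e2ennreal (gz (fst \<omega>)) + 2
      \<le> e2ennreal (fJ \<omega>) + e2ennreal (- gz (fst \<omega>)) + U \<omega> + V \<omega>"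
      unfolding fJ_def gz_def U_def V_def by (rule pw1[OF A Q Bof_nonneg enn2real_nonneg])
  qed
  have mA: "(\<lambda>\<omega>. e2ennreal (- fJ \<omega>)) \<in> borel_measurable ?J" by measurable
  have mB: "(\<lambda>\<omega>. e2ennreal (gz (fst \<omega>))) \<in> borel_measurable ?J" by measurable
  have mC: "(\<lambda>\<omega>. e2ennreal (fJ \<omega>)) \<in> borel_measurable ?J" by measurable
  have mD: "(\<lambda>\<omega>. e2ennreal (- gz (fst \<omega>))) \<in> borel_measurable ?J" by measurable
  have mU: "U \<in> borel_measurable ?J" by measurable
  have mV: "V \<in> borel_measurable ?J" by measurable
  have m2: "(\<lambda>\<omega>. 2 :: ennreal) \<in> borel_measurable ?J" by measurable
  have "(\<integral>\<^sup>+\<omega>. e2ennreal (- fJ \<omega>) + e2ennreal (gz (fst \<omega>)) + 2 \<partial>?J)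
      = (\<integral>\<^sup>+\<omega>. e2ennreal (- fJ \<omega>) + e2ennreal (gz (fst \<omega>)) \<partial>?J) + (\<integral>\<^sup>+\<omega>. 2 \<partial>?J)"
    by (rule nn_integral_add[OF borel_measurable_add[OF mA mB] m2])
  also have "\<dots> = Nf + Pg + 2"
    unfolding Nf_def Pg' two by (simp only: nn_integral_add[OF mA mB])
  finally have eqL: "Nf + Pg + 2 = (\<integral>\<^sup>+\<omega>. e2ennreal (- fJ \<omega>) + e2ennreal (gz (fst \<omega>)) + 2 \<partial>?J)" ..
  have "(\<integral>\<^sup>+\<omega>. e2ennreal (fJ \<omega>) + e2ennreal (- gz (fst \<omega>)) + U \<omega> + V \<omega> \<partial>?J)
      = (\<integral>\<^sup>+\<omega>. e2ennreal (fJ \<omega>) + e2ennreal (- gz (fst \<omega>)) + U \<omega> \<partial>?J) + (\<integral>\<^sup>+\<omega>. V \<omega> \<partial>?J)"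
    by (rule nn_integral_add[OF borel_measurable_add[OF borel_measurable_add[OF mC mD] mU] mV])
  also have "(\<integral>\<^sup>+\<omega>. e2ennreal (fJ \<omega>) + e2ennreal (- gz (fst \<omega>)) + U \<omega> \<partial>?J)
      = (\<integral>\<^sup>+\<omega>. e2ennreal (fJ \<omega>) + e2ennreal (- gz (fst \<omega>)) \<partial>?J) + (\<integral>\<^sup>+\<omega>. U \<omega> \<partial>?J)"
    by (rule nn_integral_add[OF borel_measurable_add[OF mC mD] mU])
  also have "(\<integral>\<^sup>+\<omega>. e2ennreal (fJ \<omega>) + e2ennreal (- gz (fst \<omega>)) \<partial>?J) = Pf + Ng"
    unfolding Pf_def Ng' by (rule nn_integral_add[OF mC mD])
  finally have eqR: "(\<integral>\<^sup>+\<omega>. e2ennreal (fJ \<omega>) + e2ennreal (- gz (fst \<omega>)) + U \<omega> + V \<omega> \<partial>?J)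
      = Pf + Ng + (\<integral>\<^sup>+\<omega>. U \<omega> \<partial>?J) + (\<integral>\<^sup>+\<omega>. V \<omega> \<partial>?J)" .
  have "Nf + Pg + 2 = (\<integral>\<^sup>+\<omega>. e2ennreal (- fJ \<omega>) + e2ennreal (gz (fst \<omega>)) + 2 \<partial>?J)"
    by (rule eqL)
  also have "\<dots> \<le> (\<integral>\<^sup>+\<omega>. e2ennreal (fJ \<omega>) + e2ennreal (- gz (fst \<omega>)) + U \<omega> + V \<omega> \<partial>?J)"
    by (rule nn_integral_mono_AE[OF AEp])
  also have "\<dots> = Pf + Ng + (\<integral>\<^sup>+\<omega>. U \<omega> \<partial>?J) + (\<integral>\<^sup>+\<omega>. V \<omega> \<partial>?J)"
    by (rule eqR)
  also have "\<dots> \<le> Pf + Ng + 2"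
  proof -
    have "(\<integral>\<^sup>+\<omega>. U \<omega> \<partial>?J) + (\<integral>\<^sup>+\<omega>. V \<omega> \<partial>?J) \<le> 1 + 1"
      using u_bound v_bound unfolding U_def V_def by (intro add_mono) auto
    then have "(\<integral>\<^sup>+\<omega>. U \<omega> \<partial>?J) + (\<integral>\<^sup>+\<omega>. V \<omega> \<partial>?J) \<le> 2" by (simp add: one_add_one)
    then have "(Pf + Ng) + ((\<integral>\<^sup>+\<omega>. U \<omega> \<partial>?J) + (\<integral>\<^sup>+\<omega>. V \<omega> \<partial>?J)) \<le> (Pf + Ng) + 2"
      by (rule add_left_mono)
    then show ?thesis by (simp only: add.assoc)
  qed
  finally have c: "Nf + Pg + 2 \<le> Pf + Ng + 2" .
  then have "2 + (Nf + Pg) \<le> 2 + (Pf + Ng)" by (simp only: add.commute[of 2])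
  then have key: "Nf + Pg \<le> Pf + Ng" using ennreal_add_left_cancel_le[of 2 "Nf + Pg" "Pf + Ng"] by simp
  have "enn2ereal Pg - enn2ereal Ng \<le> enn2ereal Pf - enn2ereal Nf"
    by (rule fin_ineq) (use Ng1 Nf1 key in \<open>auto simp: top_unique\<close>)
  then show ?thesis unfolding lhs rhs .
qed

end

theorem mainTheorem4:
  fixes MZ :: "'z measure" and MP :: "'psi measure" and MR :: "'zeta measure"
    and q :: "'z \<Rightarrow> 'psi \<Rightarrow> real"
    and p :: "'z \<Rightarrow> 'zeta \<Rightarrow> real"
    and tau :: "'z \<Rightarrow> 'psi \<Rightarrow> real"
    and rho :: "'z \<Rightarrow> 'zeta \<Rightarrow> real"
    and K L :: nat
  assumes sfZ: "sigma_finite_measure MZ"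
    and sfP: "sigma_finite_measure MP"
    and sfR: "sigma_finite_measure MR"
    and L_pos: "1 \<le> L"
    and q_meas: "(\<lambda>(z, \<psi>). q z \<psi>) \<in> borel_measurable (MZ \<Otimes>\<^sub>M MP)"
    and q_nonneg: "\<And>z \<psi>. 0 \<le> q z \<psi>"
    and q_norm: "(\<integral>\<^sup>+ w. ennreal (q (fst w) (snd w)) \<partial>(MZ \<Otimes>\<^sub>M MP)) = 1"
    and p_meas: "(\<lambda>(z, \<zeta>). p z \<zeta>) \<in> borel_measurable (MZ \<Otimes>\<^sub>M MR)"
    and p_nonneg: "\<And>z \<zeta>. 0 \<le> p z \<zeta>"
    and p_norm: "(\<integral>\<^sup>+ w. ennreal (p (fst w) (snd w)) \<partial>(MZ \<Otimes>\<^sub>M MR)) = 1"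
    and tau_meas: "(\<lambda>(z, \<psi>). tau z \<psi>) \<in> borel_measurable (MZ \<Otimes>\<^sub>M MP)"
    and tau_nonneg: "\<And>z \<psi>. 0 \<le> tau z \<psi>"
    and tau_norm: "\<And>z. z \<in> space MZ \<Longrightarrow> (\<integral>\<^sup>+ \<psi>. ennreal (tau z \<psi>) \<partial>MP) = 1"
    and tau_supp: "\<And>z \<psi>. z \<in> space MZ \<Longrightarrow> \<psi> \<in> space MP \<Longrightarrow> tau z \<psi> = 0 \<Longrightarrow> q z \<psi> = 0"
    and rho_meas: "(\<lambda>(z, \<zeta>). rho z \<zeta>) \<in> borel_measurable (MZ \<Otimes>\<^sub>M MR)"
    and rho_nonneg: "\<And>z \<zeta>. 0 \<le> rho z \<zeta>"
    and rho_norm: "\<And>z. z \<in> space MZ \<Longrightarrow> (\<integral>\<^sup>+ \<zeta>. ennreal (rho z \<zeta>) \<partial>MR) = 1"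
  shows "KL_div MZ (\<lambda>z. enn2real (\<integral>\<^sup>+ \<psi>. ennreal (q z \<psi>) \<partial>MP))
                   (\<lambda>z. enn2real (\<integral>\<^sup>+ \<zeta>. ennreal (p z \<zeta>) \<partial>MR))
    \<le> ext_expectation
         (density (MZ \<Otimes>\<^sub>M MP \<Otimes>\<^sub>M (\<Pi>\<^sub>M k\<in>{1..K}. MP) \<Otimes>\<^sub>M (\<Pi>\<^sub>M l\<in>{1..L}. MR))
            (\<lambda>(z, \<psi>0, \<psi>s, \<zeta>s). ennreal (q z \<psi>0 * (\<Prod>k\<in>{1..K}. tau z (\<psi>s k))
                                              * (\<Prod>l\<in>{1..L}. rho z (\<zeta>s l)))))
         (\<lambda>(z, \<psi>0, \<psi>s, \<zeta>s).
            elog_ratio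
              ((\<Sum>k\<in>{0..K}. q z ((\<psi>s(0 := \<psi>0)) k) / tau z ((\<psi>s(0 := \<psi>0)) k)) / real (K + 1))
              ((\<Sum>l\<in>{1..L}. p z (\<zeta>s l) / rho z (\<zeta>s l)) / real L))"
proof -
  interpret C: ctx MZ MP MR q p tau rho K L
    by (rule ctx.intro[OF assms])
  have e1: "(\<lambda>(z, \<psi>0, \<psi>s, \<zeta>s). ennreal (q z \<psi>0 * (\<Prod>k\<in>{1..K}. tau z (\<psi>s k))
                                              * (\<Prod>l\<in>{1..L}. rho z (\<zeta>s l)))) = C.Dn"
    by (simp add: C.Dn_def)
  have e2: "(\<lambda>(z, \<psi>0, \<psi>s, \<zeta>s).
            elog_ratio
              ((\<Sum>k\<in>{0..K}. q z ((\<psi>s(0 := \<psi>0)) k) / tau z ((\<psi>s(0 := \<psi>0)) k)) / real (K + 1))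
              ((\<Sum>l\<in>{1..L}. p z (\<zeta>s l) / rho z (\<zeta>s l)) / real L))
     = (\<lambda>\<omega>. elog_ratio (C.Aof (fst \<omega>) (fst (snd \<omega>)) (fst (snd (snd \<omega>)))) (C.Bof (fst \<omega>) (snd (snd (snd \<omega>)))))"
  proof (rule ext)
    fix \<omega> :: "'z \<times> 'psi \<times> (nat \<Rightarrow> 'psi) \<times> (nat \<Rightarrow> 'zeta)"
    obtain z a b c where "\<omega> = (z, a, b, c)" by (cases \<omega>) auto
    then show "(\<lambda>(z, \<psi>0, \<psi>s, \<zeta>s).
            elog_ratio
              ((\<Sum>k\<in>{0..K}. q z ((\<psi>s(0 := \<psi>0)) k) / tau z ((\<psi>s(0 := \<psi>0)) k)) / real (K + 1))
              ((\<Sum>l\<in>{1..L}. p z (\<zeta>s l) / rho z (\<zeta>s l)) / real L)) \<omega>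
     = elog_ratio (C.Aof (fst \<omega>) (fst (snd \<omega>)) (fst (snd (snd \<omega>)))) (C.Bof (fst \<omega>) (snd (snd (snd \<omega>))))"
      by (simp add: C.Aof_def C.Bof_def)
  qed
  show ?thesis unfolding e1 e2 by (rule C.main)
qed

end
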